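(* Let $S=(-1,1)^2$ and let $W\ge1$ be an integer. For a polynomial $$u(\xi,\eta)=\sum_{i=0}^{W}\sum_{j=0}^{W}a_{i,j}L_i(\xi)L_j(\eta)$$ (real coefficients $a_{i,j}$, $L_i$ the Legendre polynomial of degree $i$), define the quadratic forms $$\mathcal{B}(u)=\|u\|_{H^4(S)}^2=\int_S\sum_{|\alpha|\le 4}|D^{\alpha}_{\xi,\eta}u|^2\,d\xi\,d\eta$$ and $$\mathcal{C}(u)=\int_S\left(u_{\xi\xi\xi\xi}^2+u_{\eta\eta\eta\eta}^2+u_{\xi\xi\xi}^2+u_{\eta\eta\eta}^2+u_{\xi\xi}^2+u_{\eta\eta}^2+u_{\xi}^2+u_{\eta}^2+u^2\right)d\xi\,d\eta.$$ Then $\mathcal{B}$ and $\mathcal{C}$ are spectrally equivalent: there is a constant $M>0$ independent of $W$ such that for every such polynomial $u$, $$\frac{1}{M}\,\mathcal{B}(u)\le \mathcal{C}(u)\le \mathcal{B}(u).$$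
   Context: Subscripts denote partial derivatives, e.g. $u_{\xi\eta\eta}=\partial^3u/\partial\xi\,\partial\eta^2$; $D^{\alpha}_{\xi,\eta}$ is the partial derivative with multi-index $\alpha=(\alpha_1,\alpha_2)$, $|\alpha|=\alpha_1+\alpha_2$. *)

theory Defs
  imports "HOL-Analysis.Analysis" "HOL-Computational_Algebra.Polynomial"
begin

definition legendre :: "nat \<Rightarrow> real poly" where
  "legendre n = smult (1 / (2 ^ n * fact n)) ((pderiv ^^ n) ([:-1, 0, 1:] ^ n))"

definition sq :: "(real \<times> real) set" where
  "sq = box (-1, -1) (1, 1)"

definition legU :: "nat \<Rightarrow> (nat \<Rightarrow> nat \<Rightarrow> real) \<Rightarrow> real \<times> real \<Rightarrow> real" where
  "legU W a p = (\<Sum>i\<le>W. \<Sum>j\<le>W. a i j * poly (legendre i) (fst p) * poly (legendre j) (snd p))"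

definition legD :: "nat \<Rightarrow> (nat \<Rightarrow> nat \<Rightarrow> real) \<Rightarrow> nat \<Rightarrow> nat \<Rightarrow> real \<times> real \<Rightarrow> real" where
  "legD W a k l p = (\<Sum>i\<le>W. \<Sum>j\<le>W. a i j * poly ((pderiv ^^ k) (legendre i)) (fst p)
                                        * poly ((pderiv ^^ l) (legendre j)) (snd p))"

definition formB :: "nat \<Rightarrow> (nat \<Rightarrow> nat \<Rightarrow> real) \<Rightarrow> real" where
  "formB W a = integral sq (\<lambda>p. \<Sum>k\<le>4. \<Sum>l\<le>4 - k. (legD W a k l p)\<^sup>2)"

definition formC :: "nat \<Rightarrow> (nat \<Rightarrow> nat \<Rightarrow> real) \<Rightarrow> real" where
  "formC W a = integral sq (\<lambda>p. (legD W a 0 0 p)\<^sup>2 +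
      (\<Sum>k\<in>{1..4}. (legD W a k 0 p)\<^sup>2 + (legD W a 0 k p)\<^sup>2))"

lemma legD_0_0: "legD W a 0 0 = legU W a"
  by (simp add: legD_def legU_def fun_eq_iff)

end

theory Submission
  imports Defs
begin


lemma cont_int: "continuous_on UNIV (f::real\<Rightarrow>real) \<Longrightarrow> f integrable_on {a..b}"
  by (rule integrable_continuous_interval, erule continuous_on_subset, simp)

lemma poly_ftc:
  fixes p :: "real poly" assumes "a \<le> b"
  shows "integral {a..b} (\<lambda>x. poly (pderiv p) x) = poly p b - poly p a"
proof -
  have "((\<lambda>x. poly (pderiv p) x) has_integral (poly p b - poly p a)) {a..b}"
    apply (rule fundamental_theorem_of_calculus[OF assms])
    by (metis has_field_derivative_at_within has_real_derivative_iff_has_vector_derivative poly_DERIV)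
  thus ?thesis by (rule integral_unique)
qed

lemma pd_add: "(pderiv^^k) (p + q) = (pderiv^^k) p + (pderiv^^k) (q::real poly)"
  by (induct k) (auto simp: pderiv_add)
lemma pd_smult: "(pderiv^^k) (smult c p) = smult c ((pderiv^^k) (p::real poly))"
  by (induct k) (auto simp: pderiv_smult)
lemma pd_0: "(pderiv^^k) (0::real poly) = 0" by (induct k) auto
lemma pd_diff: "(pderiv^^k) (p - q) = (pderiv^^k) p - (pderiv^^k) (q::real poly)"
  by (induct k) (auto simp: pderiv_diff)
lemma pd_sum: "(pderiv^^k) (sum f A) = (\<Sum>i\<in>A. (pderiv^^k) (f i :: real poly))"
  by (induct A rule: infinite_finite_induct) (auto simp: pd_0 pd_add)
lemma pd_Suc: "(pderiv^^Suc k) p = (pderiv^^k) (pderiv p)" by (metis funpow_Suc_right comp_apply)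
lemma pd_1: "k \<ge> 1 \<Longrightarrow> (pderiv^^k) (1::real poly) = 0"
  by (cases k) (simp_all only: pd_Suc pderiv_1 pd_0)
lemma pd_pcompose_lin:
  "(pderiv^^k) (pcompose p [:b, s:]) = smult (s^k) (pcompose ((pderiv^^k) p) [:b, s::real:])"
proof (induct k)
  case 0 thus ?case by simp
next
  case (Suc k)
  have "(pderiv^^Suc k) (pcompose p [:b, s:]) = pderiv ((pderiv^^k) (pcompose p [:b, s:]))" by simp
  also have "\<dots> = smult (s^Suc k) (pcompose ((pderiv^^Suc k) p) [:b, s:])"
    unfolding Suc pderiv_smult pderiv_pcompose by (simp add: pderiv_pCons mult.commute)
  finally show ?case .
qed

lemma vanish_prod:
  fixes rho g :: "real poly"
  assumes "\<forall>i\<le>n. poly ((pderiv^^i) rho) x0 = 0"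
  shows "poly ((pderiv^^n) (rho * g)) x0 = 0"
  using assms
proof (induct n arbitrary: rho g)
  case 0 thus ?case by simp
next
  case (Suc n)
  have d: "pderiv (rho*g) = pderiv rho * g + rho * pderiv g" by (simp add: pderiv_mult algebra_simps)
  have e: "(pderiv^^Suc n) (rho*g) = (pderiv^^n) (pderiv rho * g) + (pderiv^^n) (rho * pderiv g)"
    by (simp only: pd_Suc d pd_add)
  have h1: "\<forall>i\<le>n. poly ((pderiv^^i) (pderiv rho)) x0 = 0" using Suc.prems by (auto simp: pd_Suc[symmetric])
  have h2: "\<forall>i\<le>n. poly ((pderiv^^i) rho) x0 = 0" using Suc.prems by auto
  show ?case using Suc.hyps[OF h1, of g] Suc.hyps[OF h2, of "pderiv g"] e by simp
qed

lemma match_prod: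
  fixes rho g :: "real poly"
  assumes "poly rho x0 = 1" "\<forall>i. 1 \<le> i \<and> i \<le> n \<longrightarrow> poly ((pderiv^^i) rho) x0 = 0"
  shows "poly ((pderiv^^n) (rho * g)) x0 = poly ((pderiv^^n) g) x0"
proof -
  have a: "rho * g = g + (rho - 1) * g" by (simp add: algebra_simps)
  have "\<forall>i\<le>n. poly ((pderiv^^i) (rho - 1)) x0 = 0"
  proof (intro allI impI)
    fix i assume "i \<le> n"
    show "poly ((pderiv^^i) (rho - 1)) x0 = 0"
    proof (cases "i = 0")
      case True thus ?thesis using assms(1) by simp
    next
      case False thus ?thesis using assms(2) \<open>i \<le> n\<close> by (simp add: pd_diff pd_1)
    qed
  qed
  from vanish_prod[OF this, of g] show ?thesis by (subst a) (simp add: pd_add)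
qed

definition rho1 :: "real poly" where
 "rho1 = [:-81/16, 945/32, -945/16, 1995/32, -595/16, 399/32, -35/16, 5/32:]"
definition rhom :: "real poly" where
 "rhom = [:-81/16, -945/32, -945/16, -1995/32, -595/16, -399/32, -35/16, -5/32:]"

lemma rho1_facts: "poly rho1 1 = 1" "\<forall>i. 1 \<le> i \<and> i \<le> 3 \<longrightarrow> poly ((pderiv^^i) rho1) 1 = 0"
  "\<forall>i\<le>3. poly ((pderiv^^i) rho1) 3 = 0"
  by (auto simp: rho1_def eval_nat_numeral pderiv_pCons le_Suc_eq)
lemma rhom_facts: "poly rhom (-1) = 1" "\<forall>i. 1 \<le> i \<and> i \<le> 3 \<longrightarrow> poly ((pderiv^^i) rhom) (-1) = 0"
  "\<forall>i\<le>3. poly ((pderiv^^i) rhom) (-3) = 0"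
  by (auto simp: rhom_def eval_nat_numeral pderiv_pCons le_Suc_eq)

definition cc :: "nat \<Rightarrow> real" where
  "cc j = (if j = 1 then -10 else if j = 2 then 160 else if j = 3 then -405 else 256)"

definition gext :: "real \<Rightarrow> real poly \<Rightarrow> real poly" where
  "gext \<sigma> f = (\<Sum>j\<in>{1..4::nat}. smult (cc j) (pcompose f [:\<sigma>*(1+1/real j), -1/real j:]))"

lemma cc_sum: "m \<le> 3 \<Longrightarrow> (\<Sum>j\<in>{1..4::nat}. cc j * (-1/real j)^m) = 1"
  by (auto simp: cc_def eval_nat_numeral le_Suc_eq)

lemma gext_match: "m \<le> 3 \<Longrightarrow> poly ((pderiv^^m) (gext \<sigma> f)) \<sigma> = poly ((pderiv^^m) f) \<sigma>"
proof -
  assume m: "m \<le> 3"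
  have "poly ((pderiv^^m) (gext \<sigma> f)) \<sigma> = (\<Sum>j\<in>{1..4::nat}. cc j * (-1/real j)^m * poly ((pderiv^^m) f) \<sigma>)"
    unfolding gext_def pd_sum pd_smult pd_pcompose_lin
    by (simp add: poly_sum poly_pcompose field_simps)
  also have "\<dots> = poly ((pderiv^^m) f) \<sigma>" using cc_sum[OF m] by (simp add: sum_distrib_right[symmetric])
  finally show ?thesis .
qed



definition Ext :: "nat \<Rightarrow> real poly \<Rightarrow> real poly" where
 "Ext r f = (if r = 0 then rhom * gext (-1) f else if r = 1 then f else rho1 * gext 1 f)"

lemma Ext_1[simp]: "Ext 1 f = f" "Ext (Suc 0) f = f" by (simp_all add: Ext_def)

lemma Ext_match:
  assumes "m \<le> 3"
  shows "poly ((pderiv^^m) (Ext 2 f)) 1 = poly ((pderiv^^m) f) 1"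
        "poly ((pderiv^^m) (Ext 0 f)) (-1) = poly ((pderiv^^m) f) (-1)"
proof -
  have "poly ((pderiv^^m) (rho1 * gext 1 f)) 1 = poly ((pderiv^^m) (gext 1 f)) 1"
    by (rule match_prod) (use rho1_facts assms in auto)
  thus "poly ((pderiv^^m) (Ext 2 f)) 1 = poly ((pderiv^^m) f) 1"
    using gext_match[OF assms, of 1 f] by (simp add: Ext_def)
  have "poly ((pderiv^^m) (rhom * gext (-1) f)) (-1) = poly ((pderiv^^m) (gext (-1) f)) (-1)"
    by (rule match_prod) (use rhom_facts assms in auto)
  thus "poly ((pderiv^^m) (Ext 0 f)) (-1) = poly ((pderiv^^m) f) (-1)"
    using gext_match[OF assms, of "-1" f] by (simp add: Ext_def)
qed

lemma Ext_van:
  assumes "m \<le> 3"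
  shows "poly ((pderiv^^m) (Ext 2 f)) 3 = 0" "poly ((pderiv^^m) (Ext 0 f)) (-3) = 0"
proof -
  show "poly ((pderiv^^m) (Ext 2 f)) 3 = 0"
    unfolding Ext_def by simp (rule vanish_prod, use rho1_facts assms in auto)
  show "poly ((pderiv^^m) (Ext 0 f)) (-3) = 0"
    unfolding Ext_def by simp (rule vanish_prod, use rhom_facts assms in auto)
qed

lemma ibp_piece:
  fixes A B :: "real poly" assumes "a \<le> b"
  shows "integral {a..b} (\<lambda>x. poly A x * poly (pderiv B) x) =
     poly A b * poly B b - poly A a * poly B a - integral {a..b} (\<lambda>x. poly (pderiv A) x * poly B x)"
proof -
  have eq: "\<And>x. poly (pderiv (A*B)) x = poly A x * poly (pderiv B) x + poly (pderiv A) x * poly B x"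
    by (simp add: pderiv_mult algebra_simps)
  have "integral {a..b} (\<lambda>x. poly (pderiv (A*B)) x) = poly (A*B) b - poly (A*B) a" by (rule poly_ftc[OF assms])
  moreover have "integral {a..b} (\<lambda>x. poly (pderiv (A*B)) x) = integral {a..b} (\<lambda>x. poly A x * poly (pderiv B) x) + integral {a..b} (\<lambda>x. poly (pderiv A) x * poly B x)"
    unfolding eq by (rule integral_add) (auto intro!: cont_int continuous_intros)
  ultimately show ?thesis by simp
qed

definition lo :: "nat \<Rightarrow> real" where "lo r = (if r = 0 then -3 else if r = 1 then -1 else 1)"
definition hi :: "nat \<Rightarrow> real" where "hi r = lo r + 2"

lemma lo_le_hi: "lo r \<le> hi r" by (simp add: hi_def)

definition P :: "(nat \<Rightarrow> real poly \<Rightarrow> real poly) \<Rightarrow> (nat \<Rightarrow> real poly \<Rightarrow> real poly) \<Rightarrow> real poly \<Rightarrow> real poly \<Rightarrow> real" where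
 "P F G f g = (\<Sum>r<3. integral {lo r..hi r} (\<lambda>x. poly (F r f) x * poly (G r g) x))"
definition Dx :: "nat \<Rightarrow> nat \<Rightarrow> real poly \<Rightarrow> real poly" where "Dx k r f = (pderiv^^k) (Ext r f)"
definition Dm :: "nat \<Rightarrow> nat \<Rightarrow> real poly \<Rightarrow> real poly" where "Dm k r f = (if r = 1 then (pderiv^^k) f else 0)"

lemma sum3: "(\<Sum>r<(3::nat). h r) = h 0 + h 1 + (h 2::real)" by (simp add: eval_nat_numeral)

lemma IBP1: assumes "k \<le> 3" "l \<le> 3"
  shows "P (Dx k) (Dx (Suc l)) f g = - P (Dx (Suc k)) (Dx l) f g"
proof -
  have e: "\<And>r. integral {lo r..hi r} (\<lambda>x. poly (Dx k r f) x * poly (Dx (Suc l) r g) x) = poly (Dx k r f) (hi r) * poly (Dx l r g) (hi r) - poly (Dx k r f) (lo r) * poly (Dx l r g) (lo r) - integral {lo r..hi r} (\<lambda>x. poly (Dx (Suc k) r f) x * poly (Dx l r g) x)"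
    unfolding Dx_def funpow.simps comp_apply by (rule ibp_piece) (simp add: hi_def)
  show ?thesis unfolding P_def sum3 e
    using Ext_match[OF assms(1), of f] Ext_match[OF assms(2), of g] Ext_van[OF assms(1), of f]
    by (simp add: Dx_def lo_def hi_def)
qed

lemma sum14: "(\<Sum>j\<in>{1..4::nat}. h j) = h 1 + h 2 + h 3 + (h 4::real)"
  by (simp add: eval_nat_numeral atLeastAtMostSuc_conv)

lemma cs4: "(a+b+c+d)^2 \<le> 4*(a^2+b^2+c^2+(d::real)^2)"
proof -
  have "0 \<le> (a-b)^2+(a-c)^2+(a-d)^2+(b-c)^2+(b-d)^2+(c-d)^2" by simp
  thus ?thesis by (simp add: power2_eq_square algebra_simps)
qed



lemma int_sq_nonneg: "0 \<le> integral {a..b} (\<lambda>x. (poly (p::real poly) x)\<^sup>2)"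
  by (rule Henstock_Kurzweil_Integration.integral_nonneg) (auto intro!: cont_int continuous_intros)

lemma bounded_poly_on: "\<exists>B>0. \<forall>x\<in>{a..b}. \<bar>poly p x\<bar> \<le> (B::real)"
proof -
  have "compact (poly p ` {a..b})" by (rule compact_continuous_image) (auto intro!: continuous_intros)
  then have "bounded (poly p ` {a..b})" by (rule compact_imp_bounded)
  then show ?thesis unfolding bounded_pos by auto
qed

lemma prod_bound:
  fixes rho :: "real poly" assumes ab: "a \<le> b"
  shows "\<exists>K\<ge>0. \<forall>g. integral {a..b} (\<lambda>x. (poly ((pderiv^^n) (rho*g)) x)\<^sup>2)
           \<le> K * (\<Sum>i\<le>n. integral {a..b} (\<lambda>x. (poly ((pderiv^^i) g) x)\<^sup>2))"
proof (induct n arbitrary: rho)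
  case 0
  obtain B where B: "B > 0" "\<forall>x\<in>{a..b}. \<bar>poly rho x\<bar> \<le> B" using bounded_poly_on by blast
  show ?case
  proof (intro exI[of _ "B^2"] conjI allI)
    fix g
    have "integral {a..b} (\<lambda>x. (poly (rho*g) x)\<^sup>2) \<le> integral {a..b} (\<lambda>x. B^2 * (poly g x)\<^sup>2)"
    proof (rule integral_le)
      fix x assume x: "x \<in> {a..b}"
      have "\<bar>poly rho x\<bar>^2 \<le> B^2" by (rule power_mono) (use B x in auto)
      then have "(poly rho x)\<^sup>2 \<le> B^2" by simp
      then show "(poly (rho*g) x)\<^sup>2 \<le> B^2 * (poly g x)\<^sup>2"
        by (simp add: power_mult_distrib mult_right_mono)
    qed (auto intro!: cont_int continuous_intros)
    then show "integral {a..b} (\<lambda>x. (poly ((pderiv^^0) (rho*g)) x)\<^sup>2) \<le> B^2 * (\<Sum>i\<le>0. integral {a..b} (\<lambda>x. (poly ((pderiv^^i) g) x)\<^sup>2))"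
      by simp
  qed simp
next
  case (Suc n)
  obtain K1 where K1: "K1 \<ge> 0" "\<forall>g. integral {a..b} (\<lambda>x. (poly ((pderiv^^n) (pderiv rho*g)) x)\<^sup>2)
           \<le> K1 * (\<Sum>i\<le>n. integral {a..b} (\<lambda>x. (poly ((pderiv^^i) g) x)\<^sup>2))" using Suc[of "pderiv rho"] by blast
  obtain K2 where K2: "K2 \<ge> 0" "\<forall>g. integral {a..b} (\<lambda>x. (poly ((pderiv^^n) (rho*g)) x)\<^sup>2)
           \<le> K2 * (\<Sum>i\<le>n. integral {a..b} (\<lambda>x. (poly ((pderiv^^i) g) x)\<^sup>2))" using Suc[of rho] by blast
  show ?case
  proof (intro exI[of _ "2*K1 + 2*K2"] conjI allI)
    show "0 \<le> 2*K1 + 2*K2" using K1 K2 by simp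
    fix g
    define S where "S n = (\<Sum>i\<le>n. integral {a..b} (\<lambda>x. (poly ((pderiv^^i) g) x)\<^sup>2))" for n
    define X where "X = (pderiv^^n) (pderiv rho * g)"
    define Y where "Y = (pderiv^^n) (rho * pderiv g)"
    have d: "pderiv (rho*g) = pderiv rho * g + rho * pderiv g" by (simp add: pderiv_mult algebra_simps)
    have e: "(pderiv^^Suc n) (rho*g) = X + Y"
      unfolding X_def Y_def by (simp only: pd_Suc d pd_add)
    have "integral {a..b} (\<lambda>x. (poly ((pderiv^^Suc n) (rho*g)) x)\<^sup>2) \<le>
          integral {a..b} (\<lambda>x. 2 * (poly X x)\<^sup>2 + 2 * (poly Y x)\<^sup>2)"
    proof (rule integral_le)
      fix x
      have "(poly X x + poly Y x)\<^sup>2 \<le> 2 * (poly X x)\<^sup>2 + 2 * (poly Y x)\<^sup>2"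
        using sum_squares_ge_zero[of "poly X x - poly Y x" 0] by (simp add: power2_eq_square algebra_simps)
      then show "(poly ((pderiv^^Suc n) (rho*g)) x)\<^sup>2 \<le> 2 * (poly X x)\<^sup>2 + 2 * (poly Y x)\<^sup>2"
        unfolding e by simp
    qed (auto intro!: cont_int continuous_intros)
    also have "\<dots> = 2 * integral {a..b} (\<lambda>x. (poly X x)\<^sup>2) + 2 * integral {a..b} (\<lambda>x. (poly Y x)\<^sup>2)"
      by (subst integral_add) (auto intro!: cont_int continuous_intros)
    also have "\<dots> \<le> 2 * (K1 * S n) + 2 * (K2 * (\<Sum>i\<le>n. integral {a..b} (\<lambda>x. (poly ((pderiv^^i) (pderiv g)) x)\<^sup>2)))"
      using K1(2)[rule_format, of g] K2(2)[rule_format, of "pderiv g"] unfolding X_def Y_def S_def by linarith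
    finally have h1: "integral {a..b} (\<lambda>x. (poly ((pderiv^^Suc n) (rho*g)) x)\<^sup>2) \<le> 2 * (K1 * S n) + 2 * (K2 * (\<Sum>i\<le>n. integral {a..b} (\<lambda>x. (poly ((pderiv^^i) (pderiv g)) x)\<^sup>2)))" .
    have h2: "(\<Sum>i\<le>n. integral {a..b} (\<lambda>x. (poly ((pderiv^^i) (pderiv g)) x)\<^sup>2)) \<le> S (Suc n)"
    proof -
      have "(\<Sum>i\<le>n. integral {a..b} (\<lambda>x. (poly ((pderiv^^i) (pderiv g)) x)\<^sup>2)) =
            (\<Sum>i\<le>n. integral {a..b} (\<lambda>x. (poly ((pderiv^^Suc i) g) x)\<^sup>2))" by (simp only: pd_Suc)
      also have "\<dots> \<le> S (Suc n)" unfolding S_def sum.atMost_Suc_shift using int_sq_nonneg by simp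
      finally show ?thesis .
    qed
    have h3: "S n \<le> S (Suc n)" unfolding S_def using int_sq_nonneg by simp
    have "K1 * S n \<le> K1 * S (Suc n)" using h3 K1(1) by (simp add: mult_left_mono)
    moreover have "K2 * (\<Sum>i\<le>n. integral {a..b} (\<lambda>x. (poly ((pderiv^^i) (pderiv g)) x)\<^sup>2)) \<le> K2 * S (Suc n)"
      using h2 K2(1) by (simp add: mult_left_mono)
    ultimately show "integral {a..b} (\<lambda>x. (poly ((pderiv^^Suc n) (rho*g)) x)\<^sup>2) \<le> (2*K1 + 2*K2) * S (Suc n)"
      using h1 by (simp add: algebra_simps)
  qed
qed

lemma subst_aff:
  fixes g :: "real \<Rightarrow> real" assumes g: "continuous_on UNIV g" and m: "m > 0" and ab: "a \<le> b"
    and rng: "\<forall>x\<in>{a..b}. c - m*x \<in> {-1..1}"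
  shows "integral {a..b} (\<lambda>x. g (c - m*x)) = (1/m) * integral {c - m*b..c - m*a} g"
proof -
  define F where "F t = integral {-2..t} g" for t
  have dF: "(F has_real_derivative g t) (at t)" if "t \<in> {-1..1}" for t
  proof -
    have "(F has_real_derivative g t) (at t within {-2..2})" unfolding F_def
      by (rule integral_has_real_derivative) (use that g in \<open>auto intro: continuous_on_subset\<close>)
    moreover have "at t within {-2..2} = at t" using that by (intro at_within_Icc_at) auto
    ultimately show ?thesis by simp
  qed
  have "((\<lambda>x. g (c - m*x)) has_integral ((-(1/m)) * F (c - m*b) - (-(1/m)) * F (c - m*a))) {a..b}"
  proof (rule fundamental_theorem_of_calculus[OF ab])
    fix x assume x: "x \<in> {a..b}"
    have "((\<lambda>x. -(1/m) * F (c - m*x)) has_real_derivative (-(1/m)) * (g (c - m*x) * (-m))) (at x)"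
      by (intro DERIV_cmult DERIV_chain2[OF dF]) (use rng x in \<open>auto intro!: derivative_eq_intros\<close>)
    moreover have "(-(1/m)) * (g (c - m*x) * (-m)) = g (c - m*x)" using m by simp
    ultimately show "((\<lambda>x. -(1/m) * F (c - m*x)) has_vector_derivative g (c - m*x)) (at x within {a..b})"
      by (metis has_field_derivative_at_within has_real_derivative_iff_has_vector_derivative)
  qed
  then have "integral {a..b} (\<lambda>x. g (c - m*x)) = (1/m) * (F (c - m*a) - F (c - m*b))"
    by (simp add: integral_unique algebra_simps)
  also have "F (c - m*a) - F (c - m*b) = integral {c - m*b..c - m*a} g"
  proof -
    have r1: "c - m*a \<in> {-1..1}" "c - m*b \<in> {-1..1}" using rng ab by auto
    have "integral {-2..c - m*b} g + integral {c - m*b..c - m*a} g = integral {-2..c - m*a} g"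
    proof (rule Henstock_Kurzweil_Integration.integral_combine)
      show "-2 \<le> c - m*b" using r1 by simp
      have "m*a \<le> m*b" using ab m by (simp add: mult_left_mono)
      then show "c - m*b \<le> c - m*a" by simp
      show "g integrable_on {-2..c - m*a}" by (rule cont_int[OF g])
    qed
    thus ?thesis unfolding F_def by simp
  qed
  finally show ?thesis .
qed



lemma gext_poly: "poly ((pderiv^^i) (gext \<sigma> f)) x =
  (\<Sum>j\<in>{1..4::nat}. cc j * (-1/real j)^i * poly ((pderiv^^i) f) (\<sigma>*(1+1/real j) - (1/real j)*x))"
  unfolding gext_def pd_sum pd_smult pd_pcompose_lin
  by (simp add: poly_sum poly_pcompose algebra_simps)

lemma range_ok:
  assumes "(\<sigma> = 1 \<and> a = 1 \<and> b = 3) \<or> (\<sigma> = -1 \<and> a = -3 \<and> b = -1)" "j \<in> {1..4::nat}" "x \<in> {a..b}"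
  shows "\<sigma>*(1+1/real j) - (1/real j)*x \<in> {-1..(1::real)}"
proof -
  define t where "t = 1/real j"
  have t: "0 < t" "t \<le> 1" using assms(2) by (auto simp: t_def)
  have e: "\<sigma>*(1+1/real j) - (1/real j)*x = \<sigma> + t * (\<sigma> - x)" using assms(2) unfolding t_def by (auto simp: field_simps)
  show ?thesis using assms(1)
  proof
    assume h: "\<sigma> = 1 \<and> a = 1 \<and> b = 3"
    then have x: "0 \<le> x - 1" "x - 1 \<le> 2" using assms(3) by auto
    have "0 \<le> t * (x - 1)" using t x by simp
    moreover have "t * (x - 1) \<le> 1 * 2" using t x by (intro mult_mono) auto
    ultimately show ?thesis unfolding e using h by (auto simp: algebra_simps)
  next
    assume h: "\<sigma> = -1 \<and> a = -3 \<and> b = -1"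
    then have x: "0 \<le> -1 - x" "-1 - x \<le> 2" using assms(3) by auto
    have "0 \<le> t * (-1 - x)" using t x by simp
    moreover have "t * (-1 - x) \<le> 1 * 2" using t x by (intro mult_mono) auto
    ultimately show ?thesis unfolding e using h by (auto simp: algebra_simps)
  qed
qed

lemma gext_bound:
  assumes ab: "(\<sigma> = 1 \<and> a = 1 \<and> b = 3) \<or> (\<sigma> = -1 \<and> a = -3 \<and> b = -1)"
  shows "integral {a..b} (\<lambda>x. (poly ((pderiv^^i) (gext \<sigma> f)) x)\<^sup>2)
     \<le> (4 * (\<Sum>j\<in>{1..4::nat}. (cc j)\<^sup>2 * real j)) * integral {-1..1} (\<lambda>x. (poly ((pderiv^^i) f) x)\<^sup>2)"
proof -
  define h where "h = (pderiv^^i) f"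
  define z where "z j x = poly h (\<sigma>*(1+1/real j) - (1/real j)*x)" for j x
  have le: "a \<le> b" using ab by auto
  have pt: "(poly ((pderiv^^i) (gext \<sigma> f)) x)\<^sup>2 \<le> 4 * (\<Sum>j\<in>{1..4::nat}. (cc j)\<^sup>2 * (z j x)\<^sup>2)" for x
  proof -
    have y: "(cc j * (-1/real j)^i * z j x)\<^sup>2 \<le> (cc j)\<^sup>2 * (z j x)\<^sup>2" if "j \<in> {1..4}" for j
    proof -
      have "\<bar>-1/real j\<bar> \<le> 1" using that by auto
      then have "\<bar>(-1/real j)^i\<bar> \<le> 1" by (simp add: power_abs[symmetric] power_le_one)
      then have "((-1/real j)^i)\<^sup>2 \<le> 1" by (metis abs_le_square_iff abs_one power_one)
      then have "(cc j)\<^sup>2 * (z j x)\<^sup>2 * ((-1/real j)^i)\<^sup>2 \<le> (cc j)\<^sup>2 * (z j x)\<^sup>2 * 1"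
        by (intro mult_left_mono) auto
      then show ?thesis by (simp add: power_mult_distrib algebra_simps)
    qed
    have "(poly ((pderiv^^i) (gext \<sigma> f)) x)\<^sup>2 = (\<Sum>j\<in>{1..4::nat}. cc j * (-1/real j)^i * z j x)\<^sup>2"
      unfolding gext_poly z_def h_def ..
    also have "\<dots> \<le> 4 * (\<Sum>j\<in>{1..4::nat}. (cc j * (-1/real j)^i * z j x)\<^sup>2)"
      unfolding sum14 by (rule cs4)
    also have "\<dots> \<le> 4 * (\<Sum>j\<in>{1..4::nat}. (cc j)\<^sup>2 * (z j x)\<^sup>2)"
      using y by (intro mult_left_mono sum_mono) auto
    finally show ?thesis .
  qed
  have cz: "continuous_on UNIV (\<lambda>x. (z j x)\<^sup>2)" for j unfolding z_def by (intro continuous_intros)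
  have "integral {a..b} (\<lambda>x. (poly ((pderiv^^i) (gext \<sigma> f)) x)\<^sup>2) \<le>
        integral {a..b} (\<lambda>x. 4 * (\<Sum>j\<in>{1..4::nat}. (cc j)\<^sup>2 * (z j x)\<^sup>2))"
    by (rule integral_le) (use pt in \<open>auto intro!: cont_int continuous_intros cz\<close>)
  also have "\<dots> = 4 * (\<Sum>j\<in>{1..4::nat}. (cc j)\<^sup>2 * integral {a..b} (\<lambda>x. (z j x)\<^sup>2))"
    by (subst integral_mult_right, subst integral_sum) (auto intro!: cont_int continuous_intros cz)
  also have "\<dots> \<le> 4 * (\<Sum>j\<in>{1..4::nat}. (cc j)\<^sup>2 * (real j * integral {-1..1} (\<lambda>x. (poly h x)\<^sup>2)))"
  proof -
    have "(cc j)\<^sup>2 * integral {a..b} (\<lambda>x. (z j x)\<^sup>2) \<le> (cc j)\<^sup>2 * (real j * integral {-1..1} (\<lambda>x. (poly h x)\<^sup>2))"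
      if j: "j \<in> {1..4}" for j
    proof -
    have rng: "\<forall>x\<in>{a..b}. \<sigma>*(1+1/real j) - (1/real j)*x \<in> {-1..1}" using range_ok[OF ab] j by auto
    have "integral {a..b} (\<lambda>x. (z j x)\<^sup>2) = (1/(1/real j)) * integral {\<sigma>*(1+1/real j) - (1/real j)*b..\<sigma>*(1+1/real j) - (1/real j)*a} (\<lambda>x. (poly h x)\<^sup>2)"
      unfolding z_def
      by (rule subst_aff[where g="\<lambda>x. (poly h x)\<^sup>2"]) (use rng le j in \<open>auto intro!: continuous_intros\<close>)
    also have "\<dots> \<le> real j * integral {-1..1} (\<lambda>x. (poly h x)\<^sup>2)"
    proof -
      have "integral {\<sigma>*(1+1/real j) - (1/real j)*b..\<sigma>*(1+1/real j) - (1/real j)*a} (\<lambda>x. (poly h x)\<^sup>2) \<le> integral {-1..1} (\<lambda>x. (poly h x)\<^sup>2)"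
        by (rule integral_subset_le) (use rng le in \<open>auto intro!: cont_int continuous_intros\<close>)
      then show ?thesis by (simp add: mult_left_mono)
    qed
    finally show ?thesis by (simp add: mult_left_mono)
    qed
    then have "(\<Sum>j\<in>{1..4::nat}. (cc j)\<^sup>2 * integral {a..b} (\<lambda>x. (z j x)\<^sup>2)) \<le> (\<Sum>j\<in>{1..4::nat}. (cc j)\<^sup>2 * (real j * integral {-1..1} (\<lambda>x. (poly h x)\<^sup>2)))"
      by (rule sum_mono)
    then show ?thesis by simp
  qed
  also have "\<dots> = (4 * (\<Sum>j\<in>{1..4::nat}. (cc j)\<^sup>2 * real j)) * integral {-1..1} (\<lambda>x. (poly h x)\<^sup>2)"
    by (simp add: sum_distrib_left sum_distrib_right mult.assoc mult.left_commute)
  finally show ?thesis unfolding h_def .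
qed

definition Gn :: "nat \<Rightarrow> real poly \<Rightarrow> real" where
  "Gn j f = integral {-1..1} (\<lambda>x. (poly ((pderiv^^j) f) x)\<^sup>2)"

lemma Gn_nonneg: "0 \<le> Gn j f" unfolding Gn_def by (rule int_sq_nonneg)

lemma P_Dm: "P (Dm j) (Dm j) f f = Gn j f"
  by (simp add: P_def sum3 Dm_def Gn_def lo_def hi_def power2_eq_square)

lemma piece_bound:
  assumes ab: "(\<sigma> = 1 \<and> a = 1 \<and> b = 3 \<and> rho = rho1) \<or> (\<sigma> = -1 \<and> a = -3 \<and> b = -1 \<and> rho = rhom)"
  shows "\<exists>K\<ge>0. \<forall>f. integral {a..b} (\<lambda>x. (poly ((pderiv^^m) (rho * gext \<sigma> f)) x)\<^sup>2) \<le> K * (\<Sum>j\<le>m. Gn j f)"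
proof -
  have le: "a \<le> b" using ab by auto
  obtain K where K: "K \<ge> 0" "\<forall>g. integral {a..b} (\<lambda>x. (poly ((pderiv^^m) (rho*g)) x)\<^sup>2)
           \<le> K * (\<Sum>i\<le>m. integral {a..b} (\<lambda>x. (poly ((pderiv^^i) g) x)\<^sup>2))"
    using prod_bound[OF le] by blast
  define G4 where "G4 = 4 * (\<Sum>j\<in>{1..4::nat}. (cc j)\<^sup>2 * real j)"
  have G4: "G4 \<ge> 0" unfolding G4_def by (intro mult_nonneg_nonneg sum_nonneg) auto
  have gb: "integral {a..b} (\<lambda>x. (poly ((pderiv^^i) (gext \<sigma> f)) x)\<^sup>2) \<le> G4 * Gn i f" for i f
    unfolding G4_def Gn_def by (rule gext_bound) (use ab in auto)
  show ?thesis
  proof (intro exI[of _ "K * G4"] conjI allI)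
    show "0 \<le> K * G4" using K G4 by simp
    fix f
    have "integral {a..b} (\<lambda>x. (poly ((pderiv^^m) (rho * gext \<sigma> f)) x)\<^sup>2)
       \<le> K * (\<Sum>i\<le>m. integral {a..b} (\<lambda>x. (poly ((pderiv^^i) (gext \<sigma> f)) x)\<^sup>2))" using K(2) by blast
    also have "\<dots> \<le> K * (\<Sum>i\<le>m. G4 * Gn i f)" using K(1) gb by (intro mult_left_mono sum_mono) auto
    finally show "integral {a..b} (\<lambda>x. (poly ((pderiv^^m) (rho * gext \<sigma> f)) x)\<^sup>2) \<le> K * G4 * (\<Sum>j\<le>m. Gn j f)"
      by (simp add: sum_distrib_left algebra_simps)
  qed
qed

lemma BND1: "\<exists>K\<ge>0. \<forall>f. P (Dx m) (Dx m) f f \<le> K * (\<Sum>j\<le>m. Gn j f)"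
proof -
  obtain K0 where K0: "K0 \<ge> 0" "\<forall>f. integral {-3..-1} (\<lambda>x. (poly ((pderiv^^m) (rhom * gext (-1) f)) x)\<^sup>2) \<le> K0 * (\<Sum>j\<le>m. Gn j f)"
    using piece_bound[of "-1" "-3" "-1" rhom m] by auto
  obtain K2 where K2: "K2 \<ge> 0" "\<forall>f. integral {1..3} (\<lambda>x. (poly ((pderiv^^m) (rho1 * gext 1 f)) x)\<^sup>2) \<le> K2 * (\<Sum>j\<le>m. Gn j f)"
    using piece_bound[of 1 1 3 rho1 m] by auto
  show ?thesis
  proof (intro exI[of _ "K0 + 1 + K2"] conjI allI)
    show "0 \<le> K0 + 1 + K2" using K0 K2 by simp
    fix f
    have m: "Gn m f \<le> (\<Sum>j\<le>m. Gn j f)"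
      by (rule member_le_sum) (auto simp: Gn_nonneg)
    have "P (Dx m) (Dx m) f f = integral {-3..-1} (\<lambda>x. (poly ((pderiv^^m) (rhom * gext (-1) f)) x)\<^sup>2)
       + Gn m f + integral {1..3} (\<lambda>x. (poly ((pderiv^^m) (rho1 * gext 1 f)) x)\<^sup>2)"
      by (simp add: P_def sum3 Dx_def Gn_def lo_def hi_def power2_eq_square Ext_def)
    also have "\<dots> \<le> K0 * (\<Sum>j\<le>m. Gn j f) + (\<Sum>j\<le>m. Gn j f) + K2 * (\<Sum>j\<le>m. Gn j f)"
      using K0(2) K2(2) m by (meson add_mono)
    finally show "P (Dx m) (Dx m) f f \<le> (K0 + 1 + K2) * (\<Sum>j\<le>m. Gn j f)" by (simp add: algebra_simps)
  qed
qed



definition cont2 :: "(real \<Rightarrow> real \<Rightarrow> real) \<Rightarrow> bool" where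
  "cont2 h \<longleftrightarrow> continuous_on UNIV (\<lambda>p. h (fst p) (snd p))"

lemma param_cont:
  assumes "cont2 h" shows "continuous_on UNIV (\<lambda>x. integral {c..d} (h x))"
proof -
  have "continuous_on (UNIV \<times> cbox c d) (\<lambda>(x, t). h x t)"
    using assms unfolding cont2_def by (auto simp: case_prod_beta intro: continuous_on_subset)
  from integral_continuous_on_param[OF this] show ?thesis unfolding interval_cbox .
qed

lemma param_int: "cont2 h \<Longrightarrow> (\<lambda>x. integral {c..d} (h x)) integrable_on {a..b}"
  by (rule cont_int, rule param_cont)

lemma cont2_mult: "cont2 f \<Longrightarrow> cont2 g \<Longrightarrow> cont2 (\<lambda>x y. f x y * g x y)"
  unfolding cont2_def by (intro continuous_intros)
lemma cont2_add: "cont2 f \<Longrightarrow> cont2 g \<Longrightarrow> cont2 (\<lambda>x y. f x y + g x y)"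
  unfolding cont2_def by (intro continuous_intros)
lemma cont2_cmult: "cont2 f \<Longrightarrow> cont2 (\<lambda>x y. c * f x y)"
  unfolding cont2_def by (intro continuous_intros)

lemma cont2_sec: assumes "cont2 h" shows "continuous_on UNIV (h x)" "continuous_on UNIV (\<lambda>x. h x y)"
proof -
  have c: "continuous_on UNIV (\<lambda>p. h (fst p) (snd p))" using assms by (simp add: cont2_def)
  have "continuous_on UNIV ((\<lambda>p. h (fst p) (snd p)) \<circ> (\<lambda>y. (x,y)))"
    by (rule continuous_on_compose) (auto intro!: continuous_intros intro: continuous_on_subset[OF c])
  then show "continuous_on UNIV (h x)" by (simp add: o_def)
  have "continuous_on UNIV ((\<lambda>p. h (fst p) (snd p)) \<circ> (\<lambda>x. (x,y)))"
    by (rule continuous_on_compose) (auto intro!: continuous_intros intro: continuous_on_subset[OF c])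
  then show "continuous_on UNIV (\<lambda>x. h x y)" by (simp add: o_def)
qed

lemma II_add:
  assumes "cont2 f" "cont2 g"
  shows "integral {a..b} (\<lambda>x. integral {c..d} (\<lambda>y. f x y + g x y)) =
    integral {a..b} (\<lambda>x. integral {c..d} (\<lambda>y. f x y)) + integral {a..b} (\<lambda>x. integral {c..d} (\<lambda>y. g x y))"
proof -
  have i: "(\<lambda>y. f x y) integrable_on {c..d}" "(\<lambda>y. g x y) integrable_on {c..d}" for x
    using assms by (auto intro!: cont_int cont2_sec(1))
  show ?thesis
    apply (simp only: integral_add[OF i])
    apply (rule integral_add)
    using param_int[OF assms(1)] param_int[OF assms(2)] by auto
qed

lemma II_cmult:
  "integral {a..b} (\<lambda>x. integral {c..d} (\<lambda>y. (k::real) * f x y)) = k * integral {a..b} (\<lambda>x. integral {c..d} (\<lambda>y. f x y))"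
  by simp

lemma II_sum:
  assumes "finite A" "\<And>t. t \<in> A \<Longrightarrow> cont2 (h t)"
  shows "integral {a..b} (\<lambda>x. integral {c..d} (\<lambda>y. \<Sum>t\<in>A. h t x y)) = (\<Sum>t\<in>A. integral {a..b} (\<lambda>x. integral {c..d} (\<lambda>y. h t x y)))"
  using assms
proof (induct A rule: finite_induct)
  case empty thus ?case by simp
next
  case (insert t A)
  have c: "cont2 (\<lambda>x y. \<Sum>t\<in>A. h t x y)" using insert unfolding cont2_def by (intro continuous_intros) auto
  have "integral {a..b} (\<lambda>x. integral {c..d} (\<lambda>y. \<Sum>t\<in>insert t A. h t x y)) =
        integral {a..b} (\<lambda>x. integral {c..d} (\<lambda>y. h t x y + (\<Sum>t\<in>A. h t x y)))"
    using insert by simp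
  also have "\<dots> = integral {a..b} (\<lambda>x. integral {c..d} (\<lambda>y. h t x y)) + integral {a..b} (\<lambda>x. integral {c..d} (\<lambda>y. \<Sum>t\<in>A. h t x y))"
    using insert.prems by (intro II_add[OF _ c]) auto
  also have "integral {a..b} (\<lambda>x. integral {c..d} (\<lambda>y. \<Sum>t\<in>A. h t x y)) = (\<Sum>t\<in>A. integral {a..b} (\<lambda>x. integral {c..d} (\<lambda>y. h t x y)))"
    using insert.hyps(3) insert.prems by blast
  finally show ?case using insert.hyps(1,2) by (simp add: sum.insert)
qed

lemma II_le:
  assumes "cont2 f" "cont2 g" "\<And>x y. f x y \<le> g x y"
  shows "integral {a..b} (\<lambda>x. integral {c..d} (\<lambda>y. f x y)) \<le> integral {a..b} (\<lambda>x. integral {c..d} (\<lambda>y. g x y))"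
proof (rule integral_le)
  show "(\<lambda>x. integral {c..d} (\<lambda>y. f x y)) integrable_on {a..b}" using param_int[OF assms(1)] by simp
  show "(\<lambda>x. integral {c..d} (\<lambda>y. g x y)) integrable_on {a..b}" using param_int[OF assms(2)] by simp
  fix x
  have i: "(\<lambda>y. f x y) integrable_on {c..d}" "(\<lambda>y. g x y) integrable_on {c..d}"
    using assms by (auto intro!: cont_int cont2_sec(1))
  show "integral {c..d} (\<lambda>y. f x y) \<le> integral {c..d} (\<lambda>y. g x y)"
    by (rule integral_le[OF i]) (use assms(3) in auto)
qed

lemma II_nonneg:
  assumes "cont2 f" "\<And>x y. 0 \<le> f x y"
  shows "0 \<le> integral {a..b} (\<lambda>x. integral {c..d} (\<lambda>y. f x y))"
  using II_le[of "\<lambda>x y. 0" f a b c d] assms by (simp add: cont2_def)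

lemma II_amgm:
  assumes "cont2 f" "cont2 g"
  shows "integral {a..b} (\<lambda>x. integral {c..d} (\<lambda>y. f x y * g x y)) \<le>
    1/2 * integral {a..b} (\<lambda>x. integral {c..d} (\<lambda>y. f x y * f x y)) + 1/2 * integral {a..b} (\<lambda>x. integral {c..d} (\<lambda>y. g x y * g x y))"
proof -
  have "integral {a..b} (\<lambda>x. integral {c..d} (\<lambda>y. f x y * g x y)) \<le>
        integral {a..b} (\<lambda>x. integral {c..d} (\<lambda>y. 1/2 * (f x y * f x y) + 1/2 * (g x y * g x y)))"
  proof (rule II_le)
    show "cont2 (\<lambda>x y. f x y * g x y)" using assms by (rule cont2_mult)
    show "cont2 (\<lambda>x y. 1/2 * (f x y * f x y) + 1/2 * (g x y * g x y))"
      using assms by (intro cont2_add cont2_cmult cont2_mult)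
    fix x y
    show "f x y * g x y \<le> 1/2 * (f x y * f x y) + 1/2 * (g x y * g x y)"
      using sum_squares_ge_zero[of "f x y - g x y" 0] by (simp add: power2_eq_square algebra_simps)
  qed
  also have "\<dots> = 1/2 * integral {a..b} (\<lambda>x. integral {c..d} (\<lambda>y. f x y * f x y)) + 1/2 * integral {a..b} (\<lambda>x. integral {c..d} (\<lambda>y. g x y * g x y))"
    by (simp only: II_add[OF cont2_cmult[OF cont2_mult[OF assms(1) assms(1)]] cont2_cmult[OF cont2_mult[OF assms(2) assms(2)]]] II_cmult)
  finally show ?thesis .
qed

lemma II_swap:
  assumes "cont2 h"
  shows "integral {a..b} (\<lambda>x. integral {c..d} (\<lambda>y. h x y)) = integral {c..d} (\<lambda>y. integral {a..b} (\<lambda>x. h x y))"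
proof -
  have "continuous_on (cbox (a,c) (b,d)) (\<lambda>(x,y). h x y)"
    using assms unfolding cont2_def by (auto simp: case_prod_beta intro: continuous_on_subset)
  from integral_swap_continuous[OF this] show ?thesis unfolding interval_cbox .
qed



definition linfam :: "(nat \<Rightarrow> real poly \<Rightarrow> real poly) \<Rightarrow> bool" where
 "linfam F \<longleftrightarrow> (\<forall>r p q. F r (p + q) = F r p + F r q) \<and> (\<forall>r c p. F r (smult c p) = smult c (F r p))"

lemma linfam_0: "linfam F \<Longrightarrow> F r 0 = 0"
  unfolding linfam_def by (metis smult_0_left)

lemma linfam_sum:
  assumes "linfam F"
  shows "F r (\<Sum>j\<in>A. smult (c j) (p j)) = (\<Sum>j\<in>A. smult (c j) (F r (p j)))"
  by (induct A rule: infinite_finite_induct) (use assms linfam_0 in \<open>auto simp: linfam_def\<close>)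

lemma smult_sum_right: "smult c (sum f A) = (\<Sum>x\<in>A. smult c (f x :: real poly))"
  by (induct A rule: infinite_finite_induct) (auto simp: smult_add_right)

lemma gext_add: "gext \<sigma> (p + q) = gext \<sigma> p + gext \<sigma> q"
  unfolding gext_def by (simp add: pcompose_add smult_add_right sum.distrib)
lemma gext_smult: "gext \<sigma> (smult c p) = smult c (gext \<sigma> p)"
  unfolding gext_def by (simp add: pcompose_smult smult_sum_right mult.commute)
lemma Ext_add: "Ext r (p + q) = Ext r p + Ext r q"
  unfolding Ext_def by (simp add: gext_add distrib_left)
lemma Ext_smult: "Ext r (smult c p) = smult c (Ext r p)"
  unfolding Ext_def by (simp add: gext_smult)

lemma linfam_Dx: "linfam (Dx k)"
  unfolding linfam_def Dx_def by (simp add: Ext_add Ext_smult pd_add pd_smult)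
lemma linfam_Dm: "linfam (Dm k)"
  unfolding linfam_def Dm_def by (simp add: pd_add pd_smult)

definition U :: "(nat \<Rightarrow> real poly \<Rightarrow> real poly) \<Rightarrow> (nat \<Rightarrow> real poly \<Rightarrow> real poly) \<Rightarrow> (nat \<Rightarrow> nat \<Rightarrow> real) \<Rightarrow> nat \<Rightarrow> nat \<Rightarrow> nat \<Rightarrow> real \<Rightarrow> real \<Rightarrow> real" where
 "U F H a W r s x y = (\<Sum>i\<le>W. \<Sum>j\<le>W. a i j * poly (F r (legendre i)) x * poly (H s (legendre j)) y)"

definition J :: "(nat \<Rightarrow> real poly \<Rightarrow> real poly) \<Rightarrow> (nat \<Rightarrow> real poly \<Rightarrow> real poly) \<Rightarrow> (nat \<Rightarrow> real poly \<Rightarrow> real poly) \<Rightarrow> (nat \<Rightarrow> real poly \<Rightarrow> real poly) \<Rightarrow> (nat \<Rightarrow> nat \<Rightarrow> real) \<Rightarrow> nat \<Rightarrow> real" where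
 "J F G H K a W = (\<Sum>r<3. \<Sum>s<3. integral {lo r..hi r} (\<lambda>x. integral {lo s..hi s} (\<lambda>y. U F H a W r s x y * U G K a W r s x y)))"

definition q :: "(nat \<Rightarrow> real poly \<Rightarrow> real poly) \<Rightarrow> (nat \<Rightarrow> nat \<Rightarrow> real) \<Rightarrow> nat \<Rightarrow> nat \<Rightarrow> real \<Rightarrow> real poly" where
 "q F a W r x = (\<Sum>j\<le>W. smult (\<Sum>i\<le>W. a i j * poly (F r (legendre i)) x) (legendre j))"

lemma U_q: assumes h: "linfam H" shows "U F H a W r s x y = poly (H s (q F a W r x)) y"
proof -
  have "poly (H s (q F a W r x)) y = (\<Sum>j\<le>W. (\<Sum>i\<le>W. a i j * poly (F r (legendre i)) x) * poly (H s (legendre j)) y)"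
    unfolding q_def linfam_sum[OF h] by (simp add: poly_sum)
  also have "\<dots> = U F H a W r s x y" unfolding U_def sum_distrib_right by (rule sum.swap)
  finally show ?thesis by simp
qed

lemma cont2_U: "cont2 (U F H a W r s)"
  unfolding cont2_def U_def by (intro continuous_intros)

lemma cont2_UU: "cont2 (\<lambda>x y. U F H a W r s x y * U G K a W r s x y)"
  by (intro cont2_mult cont2_U)

lemma P_q: "linfam H \<Longrightarrow> linfam K \<Longrightarrow> P H K (q F a W r x) (q G a W r x) =
   (\<Sum>s<3. integral {lo s..hi s} (\<lambda>y. U F H a W r s x y * U G K a W r s x y))"
  unfolding P_def by (simp add: U_q)

lemma P_q_cont: "linfam H \<Longrightarrow> linfam K \<Longrightarrow> continuous_on UNIV (\<lambda>x. P H K (q F a W r x) (q G a W r x))"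
  unfolding P_q by (intro continuous_on_sum param_cont cont2_UU)

lemma J_fiber: "linfam H \<Longrightarrow> linfam K \<Longrightarrow>
  J F G H K a W = (\<Sum>r<3. integral {lo r..hi r} (\<lambda>x. P H K (q F a W r x) (q G a W r x)))"
  unfolding J_def P_q
  by (subst integral_sum) (auto intro!: param_int cont2_UU)

lemma U_T: "U F H a W r s x y = U H F (\<lambda>i j. a j i) W s r y x"
  unfolding U_def by (subst sum.swap) (simp add: mult_ac)

lemma J_T: "J F G H K a W = J H K F G (\<lambda>i j. a j i) W"
proof -
  have "J F G H K a W = (\<Sum>r<3. \<Sum>s<3. integral {lo s..hi s} (\<lambda>y. integral {lo r..hi r} (\<lambda>x. U F H a W r s x y * U G K a W r s x y)))"
    unfolding J_def by (simp add: II_swap[OF cont2_UU])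
  also have "\<dots> = (\<Sum>s<3. \<Sum>r<3. integral {lo s..hi s} (\<lambda>y. integral {lo r..hi r} (\<lambda>x. U H F (\<lambda>i j. a j i) W s r y x * U K G (\<lambda>i j. a j i) W s r y x)))"
    by (subst sum.swap) (simp add: U_T[of F H] U_T[of G K])
  finally show ?thesis unfolding J_def .
qed

lemma J_ibp:
  assumes "linfam H" "linfam K" "linfam H'" "linfam K'" "\<And>f g. P H K f g = - P H' K' f g"
  shows "J F G H K a W = - J F G H' K' a W"
  unfolding J_fiber[OF assms(1,2)] J_fiber[OF assms(3,4)] assms(5) by (simp add: sum_negf)

lemma J_ibp_x:
  assumes "linfam F" "linfam G" "linfam F'" "linfam G'" "\<And>f g. P F G f g = - P F' G' f g"
  shows "J F G H K a W = - J F' G' H K a W"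
  using J_ibp[OF assms, of H K "\<lambda>i j. a j i" W] by (simp add: J_T[of _ _ H K])

lemma J_mono:
  assumes "linfam H" "finite T" "\<And>t. t \<in> T \<Longrightarrow> linfam (H' t)"
    and "\<And>f. P H H f f \<le> (\<Sum>t\<in>T. c t * P (H' t) (H' t) f f)"
  shows "J F F H H a W \<le> (\<Sum>t\<in>T. c t * J F F (H' t) (H' t) a W)"
proof -
  have "J F F H H a W \<le> (\<Sum>r<3. integral {lo r..hi r} (\<lambda>x. \<Sum>t\<in>T. c t * P (H' t) (H' t) (q F a W r x) (q F a W r x)))"
    unfolding J_fiber[OF assms(1,1)]
  proof (rule sum_mono, rule integral_le)
    fix r
    show "(\<lambda>x. P H H (q F a W r x) (q F a W r x)) integrable_on {lo r..hi r}"
      by (rule cont_int, rule P_q_cont[OF assms(1,1)])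
    show "(\<lambda>x. \<Sum>t\<in>T. c t * P (H' t) (H' t) (q F a W r x) (q F a W r x)) integrable_on {lo r..hi r}"
      by (rule cont_int) (intro continuous_on_sum continuous_intros P_q_cont assms(3))
  qed (rule assms(4))
  also have "\<dots> = (\<Sum>t\<in>T. c t * J F F (H' t) (H' t) a W)"
  proof -
    have "(\<Sum>r<3. integral {lo r..hi r} (\<lambda>x. \<Sum>t\<in>T. c t * P (H' t) (H' t) (q F a W r x) (q F a W r x)))
        = (\<Sum>r<3. \<Sum>t\<in>T. c t * integral {lo r..hi r} (\<lambda>x. P (H' t) (H' t) (q F a W r x) (q F a W r x)))"
      by (intro sum.cong refl, subst integral_sum) (auto intro!: cont_int continuous_intros P_q_cont assms)
    also have "\<dots> = (\<Sum>t\<in>T. c t * J F F (H' t) (H' t) a W)"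
      by (subst sum.swap) (simp add: J_fiber[OF assms(3) assms(3)] sum_distrib_left)
    finally show ?thesis .
  qed
  finally show ?thesis .
qed

lemma J_mono_x:
  assumes "linfam F" "finite T" "\<And>t. t \<in> T \<Longrightarrow> linfam (F' t)"
    and "\<And>f. P F F f f \<le> (\<Sum>t\<in>T. c t * P (F' t) (F' t) f f)"
  shows "J F F H H a W \<le> (\<Sum>t\<in>T. c t * J (F' t) (F' t) H H a W)"
  using J_mono[OF assms, of H "\<lambda>i j. a j i" W] by (simp add: J_T[of _ _ H H])

lemma J_amgm: "J F G H K a W \<le> 1/2 * J F F H H a W + 1/2 * J G G K K a W"
proof -
  have "J F G H K a W \<le> (\<Sum>r<3. \<Sum>s<3. 1/2 * integral {lo r..hi r} (\<lambda>x. integral {lo s..hi s} (\<lambda>y. U F H a W r s x y * U F H a W r s x y))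
      + 1/2 * integral {lo r..hi r} (\<lambda>x. integral {lo s..hi s} (\<lambda>y. U G K a W r s x y * U G K a W r s x y)))"
    unfolding J_def by (intro sum_mono II_amgm cont2_U)
  also have "\<dots> = 1/2 * J F F H H a W + 1/2 * J G G K K a W"
    unfolding J_def by (simp add: sum.distrib sum_distrib_left)
  finally show ?thesis .
qed

lemma J_nonneg: "0 \<le> J F F H H a W"
  unfolding J_def by (intro sum_nonneg II_nonneg cont2_UU) simp



lemma II_amgm_neg:
  assumes "cont2 f" "cont2 g"
  shows "- integral {a..b} (\<lambda>x. integral {c..d} (\<lambda>y. f x y * g x y)) \<le>
    1/2 * integral {a..b} (\<lambda>x. integral {c..d} (\<lambda>y. f x y * f x y)) + 1/2 * integral {a..b} (\<lambda>x. integral {c..d} (\<lambda>y. g x y * g x y))"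
proof -
  have cg: "cont2 (\<lambda>x y. - g x y)" using cont2_cmult[OF assms(2), of "-1"] by simp
  have "integral {a..b} (\<lambda>x. integral {c..d} (\<lambda>y. f x y * (- g x y))) \<le>
    1/2 * integral {a..b} (\<lambda>x. integral {c..d} (\<lambda>y. f x y * f x y)) + 1/2 * integral {a..b} (\<lambda>x. integral {c..d} (\<lambda>y. (- g x y) * (- g x y)))"
    by (rule II_amgm[OF assms(1) cg])
  then show ?thesis by simp
qed

lemma J_amgm_neg: "- J F G H K a W \<le> 1/2 * J F F H H a W + 1/2 * J G G K K a W"
proof -
  have "- J F G H K a W = (\<Sum>r<3. \<Sum>s<3. - integral {lo r..hi r} (\<lambda>x. integral {lo s..hi s} (\<lambda>y. U F H a W r s x y * U G K a W r s x y)))"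
    unfolding J_def by (simp add: sum_negf)
  also have "\<dots> \<le> (\<Sum>r<3. \<Sum>s<3. 1/2 * integral {lo r..hi r} (\<lambda>x. integral {lo s..hi s} (\<lambda>y. U F H a W r s x y * U F H a W r s x y))
      + 1/2 * integral {lo r..hi r} (\<lambda>x. integral {lo s..hi s} (\<lambda>y. U G K a W r s x y * U G K a W r s x y)))"
    by (intro sum_mono II_amgm_neg cont2_U)
  also have "\<dots> = 1/2 * J F F H H a W + 1/2 * J G G K K a W"
    unfolding J_def by (simp add: sum.distrib sum_distrib_left)
  finally show ?thesis .
qed

lemma ib10: "P (Dx 1) (Dx 1) f g = - P (Dx 2) (Dx 0) f g" using IBP1[of 1 0] by (simp add: numeral_2_eq_2)
lemma ib01: "P (Dx 1) (Dx 1) f g = - P (Dx 0) (Dx 2) f g" using IBP1[of 0 1] by (simp add: numeral_2_eq_2)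
lemma ib21: "P (Dx 2) (Dx 2) f g = - P (Dx 3) (Dx 1) f g" using IBP1[of 2 1] by (simp add: numeral_2_eq_2 numeral_3_eq_3)
lemma ib30: "P (Dx 3) (Dx 1) f g = - P (Dx 4) (Dx 0) f g" using IBP1[of 3 0] by (simp add: eval_nat_numeral)
lemma ib12: "P (Dx 2) (Dx 2) f g = - P (Dx 1) (Dx 3) f g" using IBP1[of 1 2] by (simp add: eval_nat_numeral)
lemma ib03: "P (Dx 1) (Dx 3) f g = - P (Dx 0) (Dx 4) f g" using IBP1[of 0 3] by (simp add: eval_nat_numeral)
lemma ib23: "P (Dx 3) (Dx 3) f g = - P (Dx 2) (Dx 4) f g" using IBP1[of 2 3] by (simp add: eval_nat_numeral)
lemma ib32: "P (Dx 3) (Dx 3) f g = - P (Dx 4) (Dx 2) f g" using IBP1[of 3 2] by (simp add: eval_nat_numeral)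

abbreviation JX where "JX A W k k' l l' \<equiv> J (Dx k) (Dx k') (Dx l) (Dx l') A W"

lemmas lx = linfam_Dx linfam_Dm

lemma mix11: "JX A W 1 1 1 1 = JX A W 0 2 2 0"
  using J_ibp[OF lx(1) lx(1) lx(1) lx(1) ib10, of "Dx 1" "Dx 1" A W]
        J_ibp_x[OF lx(1) lx(1) lx(1) lx(1) ib01, of "Dx 2" "Dx 0" A W] by simp
lemma mix21: "JX A W 2 2 1 1 = - JX A W 0 4 2 0"
  using J_ibp[OF lx(1) lx(1) lx(1) lx(1) ib10, of "Dx 2" "Dx 2" A W]
        J_ibp_x[OF lx(1) lx(1) lx(1) lx(1) ib12, of "Dx 2" "Dx 0" A W]
        J_ibp_x[OF lx(1) lx(1) lx(1) lx(1) ib03, of "Dx 2" "Dx 0" A W] by simp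
lemma mix12: "JX A W 1 1 2 2 = - JX A W 0 2 4 0"
  using J_ibp_x[OF lx(1) lx(1) lx(1) lx(1) ib01, of "Dx 2" "Dx 2" A W]
        J_ibp[OF lx(1) lx(1) lx(1) lx(1) ib21, of "Dx 0" "Dx 2" A W]
        J_ibp[OF lx(1) lx(1) lx(1) lx(1) ib30, of "Dx 0" "Dx 2" A W] by simp
lemma mix22: "JX A W 2 2 2 2 = JX A W 0 4 4 0"
  using J_ibp[OF lx(1) lx(1) lx(1) lx(1) ib21, of "Dx 2" "Dx 2" A W]
        J_ibp[OF lx(1) lx(1) lx(1) lx(1) ib30, of "Dx 2" "Dx 2" A W]
        J_ibp_x[OF lx(1) lx(1) lx(1) lx(1) ib12, of "Dx 4" "Dx 0" A W]
        J_ibp_x[OF lx(1) lx(1) lx(1) lx(1) ib03, of "Dx 4" "Dx 0" A W] by simp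
lemma mix31: "JX A W 3 3 1 1 = JX A W 2 4 2 0"
  using J_ibp[OF lx(1) lx(1) lx(1) lx(1) ib10, of "Dx 3" "Dx 3" A W]
        J_ibp_x[OF lx(1) lx(1) lx(1) lx(1) ib23, of "Dx 2" "Dx 0" A W] by simp
lemma mix13: "JX A W 1 1 3 3 = JX A W 0 2 4 2"
  using J_ibp_x[OF lx(1) lx(1) lx(1) lx(1) ib01, of "Dx 3" "Dx 3" A W]
        J_ibp[OF lx(1) lx(1) lx(1) lx(1) ib32, of "Dx 0" "Dx 2" A W] by simp



definition NN :: "nat \<Rightarrow> (nat \<Rightarrow> nat \<Rightarrow> real) \<Rightarrow> nat \<Rightarrow> nat \<Rightarrow> real" where
  "NN W a k l = integral {-1..1} (\<lambda>x. integral {-1..1} (\<lambda>y. legD W a k l (x,y) * legD W a k l (x,y)))"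

lemma cont2_legD: "cont2 (\<lambda>x y. legD W a k l (x,y))"
  unfolding cont2_def legD_def by (intro continuous_intros)

lemma NN_nonneg: "0 \<le> NN W a k l"
  unfolding NN_def by (rule II_nonneg) (auto intro!: cont2_mult cont2_legD)

lemma Jm_NN: "J (Dm k) (Dm k) (Dm l) (Dm l) a W = NN W a k l"
  unfolding J_def NN_def sum3 by (simp add: U_def Dm_def lo_def hi_def legD_def)

lemma sq_iter:
  fixes h :: "real \<times> real \<Rightarrow> real"
  assumes "continuous_on UNIV h"
  shows "integral sq h = integral {-1..1} (\<lambda>x. integral {-1..1} (\<lambda>y. h (x,y)))"
proof -
  have "integral sq h = integral (cbox (-1,-1) (1,1)) h" unfolding sq_def by (rule integral_open_interval)
  also have "\<dots> = integral (cbox (-1) 1) (\<lambda>x. integral (cbox (-1) 1) (\<lambda>y. h (x,y)))"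
    by (rule integral_prod_continuous) (use assms in \<open>auto intro: continuous_on_subset\<close>)
  finally show ?thesis unfolding interval_cbox .
qed

lemma formB_eq: "formB W a = (\<Sum>k\<le>4. \<Sum>l\<le>4 - k. NN W a k l)"
proof -
  have "formB W a = integral {-1..1} (\<lambda>x. integral {-1..1} (\<lambda>y. \<Sum>k\<le>4. \<Sum>l\<le>4 - k. legD W a k l (x,y) * legD W a k l (x,y)))"
    unfolding formB_def by (subst sq_iter) (auto simp: legD_def power2_eq_square intro!: continuous_intros)
  also have "\<dots> = (\<Sum>k\<le>4. \<Sum>l\<le>4 - k. NN W a k l)"
    unfolding NN_def
    by (subst II_sum; (intro sum.cong refl II_sum)?) (auto intro!: cont2_mult cont2_legD simp: cont2_def legD_def intro!: continuous_intros)
  finally show ?thesis .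
qed

lemma formC_eq: "formC W a = NN W a 0 0 + (\<Sum>k\<in>{1..4}. NN W a k 0 + NN W a 0 k)"
proof -
  have "formC W a = integral {-1..1} (\<lambda>x. integral {-1..1} (\<lambda>y. legD W a 0 0 (x,y) * legD W a 0 0 (x,y) +
      (\<Sum>k\<in>{1..4}. legD W a k 0 (x,y) * legD W a k 0 (x,y) + legD W a 0 k (x,y) * legD W a 0 k (x,y))))"
    unfolding formC_def by (subst sq_iter) (auto simp: legD_def power2_eq_square intro!: continuous_intros)
  also have "\<dots> = NN W a 0 0 + (\<Sum>k\<in>{1..4}. NN W a k 0 + NN W a 0 k)"
    unfolding NN_def
    apply (subst II_add)
      apply (auto intro!: cont2_mult cont2_legD simp: cont2_def legD_def intro!: continuous_intros)[2]
    apply (subst II_sum)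
      apply (auto intro!: cont2_add cont2_mult cont2_legD)[2]
    apply (intro arg_cong2[where f="(+)"] refl sum.cong II_add)
    by (auto intro!: cont2_mult cont2_legD)
  finally show ?thesis .
qed



lemma Kf_ex: "\<exists>Kf. \<forall>m. Kf m \<ge> 0 \<and> (\<forall>f. P (Dx m) (Dx m) f f \<le> Kf m * (\<Sum>j\<le>m. Gn j f))"
proof -
  have "\<forall>m. \<exists>K. K \<ge> 0 \<and> (\<forall>f. P (Dx m) (Dx m) f f \<le> K * (\<Sum>j\<le>m. Gn j f))" using BND1 by blast
  then show ?thesis by (rule choice)
qed

lemma BNDP:
  assumes "\<forall>m. Kf m \<ge> 0 \<and> (\<forall>f. P (Dx m) (Dx m) f f \<le> Kf m * (\<Sum>j\<le>m. Gn j f))"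
  shows "P (Dx m) (Dx m) f f \<le> (\<Sum>t\<le>m. Kf m * P (Dm t) (Dm t) f f)"
  using assms by (simp add: P_Dm sum_distrib_left[symmetric])

lemma LOW1: "P (Dm k) (Dm k) f f \<le> (\<Sum>t\<in>{0::nat}. 1 * P (Dx k) (Dx k) f f)"
proof -
  have n: "0 \<le> integral {a..b} (\<lambda>x. poly p x * poly p x)" for a b and p :: "real poly"
    using int_sq_nonneg[of a b p] by (simp add: power2_eq_square)
  show ?thesis
    unfolding P_Dm by (simp add: P_def sum3 Dx_def Gn_def power2_eq_square lo_def hi_def) (use n[of "-3" "-1" "(pderiv^^k) (Ext 0 f)"] n[of 1 3 "(pderiv^^k) (Ext 2 f)"] in linarith)
qed

lemma L1: "J (Dm k) (Dm k) (Dm l) (Dm l) A W \<le> JX A W k k l l"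
proof -
  have "J (Dm k) (Dm k) (Dm l) (Dm l) A W \<le> (\<Sum>t\<in>{0::nat}. 1 * J (Dm k) (Dm k) (Dx l) (Dx l) A W)"
    by (rule J_mono[where H'="\<lambda>_. Dx l", OF linfam_Dm _ linfam_Dx LOW1]) simp
  also have "\<dots> = J (Dm k) (Dm k) (Dx l) (Dx l) A W" by simp
  also have "\<dots> \<le> (\<Sum>t\<in>{0::nat}. 1 * J (Dx k) (Dx k) (Dx l) (Dx l) A W)"
    by (rule J_mono_x[where F'="\<lambda>_. Dx k", OF linfam_Dm _ linfam_Dx LOW1]) simp
  finally show ?thesis by simp
qed

lemma Bx_bound:
  assumes Kf: "\<forall>m. Kf m \<ge> 0 \<and> (\<forall>f. P (Dx m) (Dx m) f f \<le> Kf m * (\<Sum>j\<le>m. Gn j f))"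
  shows "JX A W m m 0 0 \<le> Kf 0 * (Kf m * (\<Sum>j\<le>m. NN W A j 0))"
proof -
  have a: "JX A W m m 0 0 \<le> (\<Sum>t\<le>0. Kf 0 * J (Dx m) (Dx m) (Dm t) (Dm t) A W)"
    by (rule J_mono[where H'=Dm, OF linfam_Dx _ linfam_Dm BNDP[OF Kf]]) simp
  have b: "J (Dx m) (Dx m) (Dm 0) (Dm 0) A W \<le> (\<Sum>t\<le>m. Kf m * J (Dm t) (Dm t) (Dm 0) (Dm 0) A W)"
    by (rule J_mono_x[where F'=Dm, OF linfam_Dx _ linfam_Dm BNDP[OF Kf]]) simp
  have "Kf 0 * J (Dx m) (Dx m) (Dm 0) (Dm 0) A W \<le> Kf 0 * (\<Sum>t\<le>m. Kf m * J (Dm t) (Dm t) (Dm 0) (Dm 0) A W)"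
    using b Kf by (simp add: mult_left_mono)
  with a show ?thesis by (simp add: Jm_NN sum_distrib_left)
qed

lemma By_bound:
  assumes Kf: "\<forall>m. Kf m \<ge> 0 \<and> (\<forall>f. P (Dx m) (Dx m) f f \<le> Kf m * (\<Sum>j\<le>m. Gn j f))"
  shows "JX A W 0 0 m m \<le> Kf 0 * (Kf m * (\<Sum>j\<le>m. NN W A 0 j))"
proof -
  have a: "JX A W 0 0 m m \<le> (\<Sum>t\<le>0. Kf 0 * J (Dm t) (Dm t) (Dx m) (Dx m) A W)"
    by (rule J_mono_x[where F'=Dm, OF linfam_Dx _ linfam_Dm BNDP[OF Kf]]) simp
  have b: "J (Dm 0) (Dm 0) (Dx m) (Dx m) A W \<le> (\<Sum>t\<le>m. Kf m * J (Dm 0) (Dm 0) (Dm t) (Dm t) A W)"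
    by (rule J_mono[where H'=Dm, OF linfam_Dx _ linfam_Dm BNDP[OF Kf]]) simp
  have "Kf 0 * J (Dm 0) (Dm 0) (Dx m) (Dx m) A W \<le> Kf 0 * (\<Sum>t\<le>m. Kf m * J (Dm 0) (Dm 0) (Dm t) (Dm t) A W)"
    using b Kf by (simp add: mult_left_mono)
  with a show ?thesis by (simp add: Jm_NN sum_distrib_left)
qed

lemma formB_split: "formB W a = formC W a + (NN W a 1 1 + NN W a 1 2 + NN W a 1 3 + NN W a 2 1 + NN W a 2 2 + NN W a 3 1)"
  unfolding formB_eq formC_eq sum14 by (simp add: eval_nat_numeral atMost_Suc)



theorem theorem2p2:
  shows "\<exists>M::real. M > 0 \<and>
    (\<forall>W::nat. W \<ge> 1 \<longrightarrow> (\<forall>a :: nat \<Rightarrow> nat \<Rightarrow> real.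
       formB W a / M \<le> formC W a \<and> formC W a \<le> formB W a))"
proof -
  obtain Kf where Kf: "\<forall>m. Kf m \<ge> 0 \<and> (\<forall>f. P (Dx m) (Dx m) f f \<le> Kf m * (\<Sum>j\<le>m. Gn j f))"
    using Kf_ex by blast
  define Q where "Q = Kf 0 * (Kf 2 + Kf 4)"
  have K0: "Kf 0 \<ge> 0" "Kf 2 \<ge> 0" "Kf 4 \<ge> 0" using Kf by auto
  have Q0: "Q \<ge> 0" unfolding Q_def using K0 by simp
  define M where "M = 1 + 6 * Q"
  have M0: "M > 0" unfolding M_def using Q0 by simp
  show ?thesis
  proof (intro exI[of _ M] conjI allI impI)
    show "M > 0" by (rule M0)
    fix W :: nat and a :: "nat \<Rightarrow> nat \<Rightarrow> real"
    define S where "S = formC W a"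
    have nn: "\<And>k l. 0 \<le> NN W a k l" by (rule NN_nonneg)
    have Sx: "(\<Sum>j\<le>2. NN W a j 0) \<le> S" "(\<Sum>j\<le>4. NN W a j 0) \<le> S"
         "(\<Sum>j\<le>2. NN W a 0 j) \<le> S" "(\<Sum>j\<le>4. NN W a 0 j) \<le> S" "0 \<le> S"
      unfolding S_def formC_eq sum14 using nn[of 1 0] nn[of 2 0] nn[of 3 0] nn[of 4 0]
        nn[of 0 1] nn[of 0 2] nn[of 0 3] nn[of 0 4] nn[of 0 0]
      by (simp_all add: eval_nat_numeral atMost_Suc)
    have fac: "Kf 0 * (Kf m * X) \<le> Q * S" if "m = 2 \<or> m = 4" "X \<le> S" for m X
    proof -
      have "Kf m * X \<le> Kf m * S" using that K0 by (auto intro: mult_left_mono)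
      then have "Kf 0 * (Kf m * X) \<le> Kf 0 * (Kf m * S)" using K0 by (simp add: mult_left_mono)
      also have "\<dots> = (Kf 0 * Kf m) * S" by simp
      also have "\<dots> \<le> Q * S"
      proof (rule mult_right_mono)
        show "Kf 0 * Kf m \<le> Q" unfolding Q_def using that K0 by (auto simp: distrib_left)
      qed (rule Sx(5))
      finally show ?thesis .
    qed
    have bx2: "JX a W 2 2 0 0 \<le> Q * S" using Bx_bound[OF Kf, where A=a and W=W and m=2] fac[of 2] Sx by force
    have bx4: "JX a W 4 4 0 0 \<le> Q * S" using Bx_bound[OF Kf, where A=a and W=W and m=4] fac[of 4] Sx by force
    have by2: "JX a W 0 0 2 2 \<le> Q * S" using By_bound[OF Kf, where A=a and W=W and m=2] fac[of 2] Sx by force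
    have by4: "JX a W 0 0 4 4 \<le> Q * S" using By_bound[OF Kf, where A=a and W=W and m=4] fac[of 4] Sx by force
    have m22: "JX a W 2 2 2 2 \<le> Q * S"
      using mix22[of a W] J_amgm[of "Dx 0" "Dx 4" "Dx 4" "Dx 0" a W] by4 bx4 by linarith
    have n11: "NN W a 1 1 \<le> Q * S"
      using L1[of 1 1 a W] Jm_NN[of 1 1 a W] mix11[of a W] J_amgm[of "Dx 0" "Dx 2" "Dx 2" "Dx 0" a W] by2 bx2 by linarith
    have n21: "NN W a 2 1 \<le> Q * S"
      using L1[of 2 1 a W] Jm_NN[of 2 1 a W] mix21[of a W] J_amgm_neg[of "Dx 0" "Dx 4" "Dx 2" "Dx 0" a W] by2 bx4 by linarith
    have n12: "NN W a 1 2 \<le> Q * S"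
      using L1[of 1 2 a W] Jm_NN[of 1 2 a W] mix12[of a W] J_amgm_neg[of "Dx 0" "Dx 2" "Dx 4" "Dx 0" a W] by4 bx2 by linarith
    have n22: "NN W a 2 2 \<le> Q * S"
      using L1[of 2 2 a W] Jm_NN[of 2 2 a W] m22 by linarith
    have n31: "NN W a 3 1 \<le> Q * S"
      using L1[of 3 1 a W] Jm_NN[of 3 1 a W] mix31[of a W] J_amgm[of "Dx 2" "Dx 4" "Dx 2" "Dx 0" a W] m22 bx4 by linarith
    have n13: "NN W a 1 3 \<le> Q * S"
      using L1[of 1 3 a W] Jm_NN[of 1 3 a W] mix13[of a W] J_amgm[of "Dx 0" "Dx 2" "Dx 4" "Dx 2" a W] by4 m22 by linarith
    have B: "formB W a = S + (NN W a 1 1 + NN W a 1 2 + NN W a 1 3 + NN W a 2 1 + NN W a 2 2 + NN W a 3 1)"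
      unfolding S_def by (rule formB_split)
    have "formB W a \<le> S * M" unfolding B M_def using n11 n12 n13 n21 n22 n31 by (simp add: algebra_simps)
    then show "formB W a / M \<le> formC W a" using M0 by (simp add: pos_divide_le_eq S_def)
    show "formC W a \<le> formB W a" unfolding B S_def using nn[of 1 1] nn[of 1 2] nn[of 1 3] nn[of 2 1] nn[of 2 2] nn[of 3 1] by linarith
  qed
qed


end
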